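(* Let $q\in\mathrm{prob}(\{0,1\}^2)$. The set $C:=\{(\pi_1,\chi^{(2)}_{1|1}-\chi^{(1)}_{1|1}):(\pi,\chi)\in\Theta_2,\ \mu(\pi,\chi)=q\}$ is nonempty and equals the set of all $(\mathrm{Pr},\Delta\mathrm{Se})\in[0,1]\times[-1,1]$ satisfying $\max\{-q_{10},\ q_{01}-q_{10}+\mathrm{Pr}-1\}\le\mathrm{Pr}\,\Delta\mathrm{Se}\le\min\{q_{01},\ q_{01}-q_{10}+1-\mathrm{Pr}\}$.
   Context: $\mathrm{prob}(\mathcal{X})$ is the set of probability densities on a finite set $\mathcal{X}$; $\mathrm{markov}(\mathcal{X},\mathcal{Y})$ the set of maps $(x,y)\mapsto p_{y|x}$ with $p_{\cdot|x}\in\mathrm{prob}(\mathcal{Y})$. $\Theta_2:=\mathrm{prob}(\{0,1\})\times\mathrm{markov}(\{0,1\},\{0,1\}^2)$, $\mu(\pi,\chi)_j:=\sum_{i=0}^1\pi_i\chi_{j|i}$ for $j\in\{0,1\}^2$, $\chi^{(1)}_{\iota|i}:=\chi_{\iota0|i}+\chi_{\iota1|i}$, $\chi^{(2)}_{\iota|i}:=\chi_{0\iota|i}+\chi_{1\iota|i}$. *)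

theory Defs
  imports Complex_Main
begin

text \<open>The set {0,1} is rendered as bool (0 = False, 1 = True); {0,1}^2 as bool \<times> bool.\<close>

definition prob_dens :: "('a::finite \<Rightarrow> real) \<Rightarrow> bool" where
  "prob_dens p \<longleftrightarrow> (\<forall>x. 0 \<le> p x) \<and> (\<Sum>x\<in>UNIV. p x) = 1"

definition markov :: "('a::finite \<Rightarrow> 'b::finite \<Rightarrow> real) \<Rightarrow> bool" where
  "markov chi \<longleftrightarrow> (\<forall>x. prob_dens (chi x))"

definition Theta2 :: "((bool \<Rightarrow> real) \<times> (bool \<Rightarrow> bool \<times> bool \<Rightarrow> real)) set" where
  "Theta2 = {(\<pi>, chi). prob_dens \<pi> \<and> markov chi}"

definition mu :: "(bool \<Rightarrow> real) \<Rightarrow> (bool \<Rightarrow> bool \<times> bool \<Rightarrow> real) \<Rightarrow> bool \<times> bool \<Rightarrow> real" where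
  "mu \<pi> chi j = (\<Sum>i\<in>UNIV. \<pi> i * chi i j)"

definition chi1 :: "(bool \<Rightarrow> bool \<times> bool \<Rightarrow> real) \<Rightarrow> bool \<Rightarrow> bool \<Rightarrow> real" where
  "chi1 chi i \<iota> = chi i (\<iota>, False) + chi i (\<iota>, True)"

definition chi2 :: "(bool \<Rightarrow> bool \<times> bool \<Rightarrow> real) \<Rightarrow> bool \<Rightarrow> bool \<Rightarrow> real" where
  "chi2 chi i \<iota> = chi i (False, \<iota>) + chi i (True, \<iota>)"

end

theory Submission
  imports Defs
begin

lemma sum_bb: "(\<Sum>x\<in>(UNIV::(bool\<times>bool) set). f x) = f (False,False) + f (False,True) + f (True,False) + f (True,True)"
proof -
  have h: "(UNIV::(bool\<times>bool) set) = {(False,False),(False,True),(True,False),(True,True)}"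
    by (auto simp: UNIV_bool)
  show ?thesis by (subst h) (simp add: algebra_simps)
qed

lemma sum_b: "(\<Sum>x\<in>(UNIV::bool set). f x) = f False + f True"
  by (simp add: UNIV_bool add.commute)

lemma pd_bb: "prob_dens (p :: bool\<times>bool \<Rightarrow> real) \<longleftrightarrow>
   p (False,False) \<ge> 0 \<and> p (False,True) \<ge> 0 \<and> p (True,False) \<ge> 0 \<and> p (True,True) \<ge> 0 \<and>
   p (False,False) + p (False,True) + p (True,False) + p (True,True) = 1"
  unfolding prob_dens_def sum_bb by (metis (full_types) surj_pair)

lemma pd_b: "prob_dens (p :: bool \<Rightarrow> real) \<longleftrightarrow> p False \<ge> 0 \<and> p True \<ge> 0 \<and> p False + p True = 1"
  unfolding prob_dens_def sum_b by (metis (full_types))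

lemma mu_eq: "mu \<pi> chi = q \<longleftrightarrow> (\<forall>j. q j = \<pi> False * chi False j + \<pi> True * chi True j)"
  unfolding mu_def sum_b by auto

lemma necessity:
  assumes "prob_dens (\<pi>::bool\<Rightarrow>real)" "markov chi" "mu \<pi> chi = q"
  defines "P \<equiv> \<pi> True" and "S \<equiv> chi2 chi True True - chi1 chi True True"
  shows "P \<in> {0..1} \<and> S \<in> {-1..1} \<and>
          max (- q (True, False)) (q (False, True) - q (True, False) + P - 1) \<le> P * S \<and>
          P * S \<le> min (q (False, True)) (q (False, True) - q (True, False) + 1 - P)"
proof -
  have pi: "\<pi> False \<ge> 0" "\<pi> True \<ge> 0" "\<pi> False + \<pi> True = 1" using assms(1) pd_b by auto
  have cT: "chi True (False,False) \<ge> 0" "chi True (False,True) \<ge> 0" "chi True (True,False) \<ge> 0" "chi True (True,True) \<ge> 0"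
    "chi True (False,False) + chi True (False,True) + chi True (True,False) + chi True (True,True) = 1"
    using assms(2) unfolding markov_def pd_bb by auto
  have cF: "chi False (False,False) \<ge> 0" "chi False (False,True) \<ge> 0" "chi False (True,False) \<ge> 0" "chi False (True,True) \<ge> 0"
    "chi False (False,False) + chi False (False,True) + chi False (True,False) + chi False (True,True) = 1"
    using assms(2) unfolding markov_def pd_bb by auto
  have q: "\<And>j. q j = \<pi> False * chi False j + \<pi> True * chi True j" using assms(3) mu_eq by auto
  have S: "S = chi True (False,True) - chi True (True,False)"
    unfolding S_def chi1_def chi2_def by simp
  have PS: "P * S = \<pi> True * chi True (False,True) - \<pi> True * chi True (True,False)"
    unfolding S P_def by (simp add: algebra_simps)
  have sT: "\<pi> True * chi True (False,False) + \<pi> True * chi True (False,True) + \<pi> True * chi True (True,False) + \<pi> True * chi True (True,True) = \<pi> True"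
    using cT(5) by (metis distrib_left mult.right_neutral)
  have sF: "\<pi> False * chi False (False,False) + \<pi> False * chi False (False,True) + \<pi> False * chi False (True,False) + \<pi> False * chi False (True,True) = \<pi> False"
    using cF(5) by (metis distrib_left mult.right_neutral)
  have c0: "chi x j \<ge> 0" for x j using assms(2) unfolding markov_def prob_dens_def by (cases j) auto
  have nT: "\<pi> True * chi True j \<ge> 0" for j using pi c0 by (simp add: mult_nonneg_nonneg)
  have nF: "\<pi> False * chi False j \<ge> 0" for j using pi c0 by (simp add: mult_nonneg_nonneg)
  have "S \<in> {-1..1}" using S cT by auto
  moreover have "P \<in> {0..1}" using pi P_def by auto
  moreover have "max (- q (True, False)) (q (False, True) - q (True, False) + P - 1) \<le> P * S"
    using PS q[of "(True,False)"] q[of "(False,True)"] sT sF pi nT nF P_def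
    by (smt (verit) nF nT)
  moreover have "P * S \<le> min (q (False, True)) (q (False, True) - q (True, False) + 1 - P)"
    using PS q[of "(True,False)"] q[of "(False,True)"] sT sF pi nT nF P_def
    by (smt (verit) nF nT)
  ultimately show ?thesis by blast
qed


lemma sufficiency:
  assumes qd: "prob_dens (q :: bool\<times>bool\<Rightarrow>real)"
    and P: "P \<in> {0..1}" and S: "S \<in> {-1..1::real}"
    and lo: "max (- q (True, False)) (q (False, True) - q (True, False) + P - 1) \<le> P * S"
    and hi: "P * S \<le> min (q (False, True)) (q (False, True) - q (True, False) + 1 - P)"
  shows "\<exists>\<pi> chi. (P, S) = (\<pi> True, chi2 chi True True - chi1 chi True True) \<and> (\<pi>, chi) \<in> Theta2 \<and> mu \<pi> chi = q"
proof -
  have q: "q (False,False) \<ge> 0" "q (False,True) \<ge> 0" "q (True,False) \<ge> 0" "q (True,True) \<ge> 0"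
    "q (False,False) + q (False,True) + q (True,False) + q (True,True) = 1" using qd pd_bb by auto
  define \<pi> :: "bool \<Rightarrow> real" where "\<pi> = (\<lambda>b. if b then P else 1 - P)"
  have pid: "prob_dens \<pi>" using P unfolding pd_b \<pi>_def by auto
  show ?thesis
  proof (cases "P = 0")
    case True
    define c :: "bool\<times>bool \<Rightarrow> real" where
      "c = (\<lambda>j. if j = (False,True) then (1+S)/2 else if j = (True,False) then (1-S)/2 else 0)"
    define chi where "chi = (\<lambda>b. if b then c else q)"
    have "(1+S)/2 + (1-S)/2 = (1::real)" by (simp add: add_divide_distrib[symmetric])
    hence "prob_dens c" using S unfolding pd_bb c_def by auto
    hence mk: "markov chi" using qd unfolding markov_def chi_def by auto
    have "mu \<pi> chi = q" unfolding mu_eq \<pi>_def chi_def using True by simp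
    moreover have "chi2 chi True True - chi1 chi True True = S"
      unfolding chi1_def chi2_def chi_def c_def by (simp add: field_simps)
    moreover have "(\<pi>, chi) \<in> Theta2" using mk pid unfolding Theta2_def by simp
    moreover have "\<pi> True = P" unfolding \<pi>_def by simp
    ultimately have "(P, S) = (\<pi> True, chi2 chi True True - chi1 chi True True) \<and> (\<pi>, chi) \<in> Theta2 \<and> mu \<pi> chi = q"
      by simp
    then show ?thesis by blast
  next
    case False
    hence Pp: "P > 0" using P by auto
    define D where "D = P * S"
    have aD: "\<bar>D\<bar> = P * \<bar>S\<bar>" unfolding D_def using P by (simp add: abs_mult)
    have "\<bar>S\<bar> \<le> 1" using S by auto
    hence absD: "\<bar>D\<bar> \<le> P" unfolding aD using P by (simp add: mult_left_le)
    define T where "T = max \<bar>D\<bar> (P - q (False,False) - q (True,True))"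
    define R where "R = P - T"
    define r :: "bool\<times>bool \<Rightarrow> real" where
      "r = (\<lambda>j. if j = (False,True) then (T+D)/2 else if j = (True,False) then (T-D)/2
               else if j = (False,False) then min (q (False,False)) R else R - min (q (False,False)) R)"
    have r: "\<And>j. 0 \<le> r j \<and> r j \<le> q j"
    proof -
      fix j :: "bool\<times>bool"
      show "0 \<le> r j \<and> r j \<le> q j"
        using q absD lo hi unfolding r_def R_def T_def D_def
        by (cases j; auto split: if_splits; smt (verit))
    qed
    have rs: "r (False,False) + r (False,True) + r (True,False) + r (True,True) = P"
      unfolding r_def R_def by (simp add: field_simps)
    have rd: "r (False,True) - r (True,False) = D" unfolding r_def by (simp add: field_simps)
    define c where "c = (\<lambda>j. r j / P)"
    define d :: "bool\<times>bool \<Rightarrow> real" where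
      "d = (if P < 1 then (\<lambda>j. (q j - r j) / (1 - P)) else (\<lambda>j. if j = (False,False) then 1 else 0))"
    define chi where "chi = (\<lambda>b. if b then c else d)"
    have pc: "prob_dens c" unfolding pd_bb c_def using r[of "(False,False)"] r[of "(False,True)"]
       r[of "(True,False)"] r[of "(True,True)"] rs Pp by (simp add: add_divide_distrib[symmetric])
    have pdd: "prob_dens d"
    proof (cases "P < 1")
      case True
      have "(q (False,False) - r (False,False)) / (1 - P) + (q (False,True) - r (False,True)) / (1 - P) +
            (q (True,False) - r (True,False)) / (1 - P) + (q (True,True) - r (True,True)) / (1 - P)
          = (1 - P) / (1 - P)" using q(5) rs by (simp add: add_divide_distrib[symmetric] algebra_simps)
      then show ?thesis unfolding pd_bb d_def using True r[of "(False,False)"] r[of "(False,True)"]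
       r[of "(True,False)"] r[of "(True,True)"] by simp
    next
      case False
      then show ?thesis unfolding pd_bb d_def by simp
    qed
    have mk: "markov chi" unfolding markov_def chi_def using pc pdd by auto
    have "mu \<pi> chi = q" unfolding mu_eq
    proof
      fix j
      show "q j = \<pi> False * chi False j + \<pi> True * chi True j"
      proof (cases "P < 1")
        case True
        then show ?thesis unfolding \<pi>_def chi_def c_def d_def using Pp by simp
      next
        case False
        hence P1: "P = 1" using P by auto
        have "q j = r j"
        proof (rule ccontr)
          assume ne: "q j \<noteq> r j"
          have "r (False,False) + r (False,True) + r (True,False) + r (True,True) <
                q (False,False) + q (False,True) + q (True,False) + q (True,True)"
            using ne r[of "(False,False)"] r[of "(False,True)"] r[of "(True,False)"] r[of "(True,True)"] r[of j]
            by (cases j) (rename_tac a b, case_tac a; case_tac b; force)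
          then show False using rs q(5) P1 by simp
        qed
        then show ?thesis unfolding \<pi>_def chi_def c_def d_def using P1 by simp
      qed
    qed
    moreover have "chi2 chi True True - chi1 chi True True = S"
    proof -
      have "chi2 chi True True - chi1 chi True True = (r (False,True) - r (True,False)) / P"
        unfolding chi1_def chi2_def chi_def c_def by (simp add: diff_divide_distrib)
      also have "\<dots> = S" using rd Pp unfolding D_def by simp
      finally show ?thesis .
    qed
    moreover have "(\<pi>, chi) \<in> Theta2" using mk pid unfolding Theta2_def by simp
    moreover have "\<pi> True = P" unfolding \<pi>_def by simp
    ultimately have "(P, S) = (\<pi> True, chi2 chi True True - chi1 chi True True) \<and> (\<pi>, chi) \<in> Theta2 \<and> mu \<pi> chi = q"
      by simp
    then show ?thesis by blast
  qed
qed

theorem lemma5: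
  fixes q :: "bool \<times> bool \<Rightarrow> real"
  assumes "prob_dens q"
  defines "C \<equiv> {(\<pi> True, chi2 chi True True - chi1 chi True True) | \<pi> chi.
                   (\<pi>, chi) \<in> Theta2 \<and> mu \<pi> chi = q}"
  shows "C \<noteq> {} \<and>
    C = {(Pr, dSe). Pr \<in> {0..1} \<and> dSe \<in> {-1..1} \<and>
          max (- q (True, False)) (q (False, True) - q (True, False) + Pr - 1) \<le> Pr * dSe \<and>
          Pr * dSe \<le> min (q (False, True)) (q (False, True) - q (True, False) + 1 - Pr)}"
proof -
  let ?B = "{(Pr, dSe). Pr \<in> {0..1} \<and> dSe \<in> {-1..1} \<and>
          max (- q (True, False)) (q (False, True) - q (True, False) + Pr - 1) \<le> Pr * dSe \<and>
          Pr * dSe \<le> min (q (False, True)) (q (False, True) - q (True, False) + 1 - Pr)}"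
  have eq: "C = ?B"
  proof
    show "C \<subseteq> ?B"
    proof
      fix x assume "x \<in> C"
      then obtain \<pi> chi where x: "x = (\<pi> True, chi2 chi True True - chi1 chi True True)"
        and t: "(\<pi>, chi) \<in> Theta2" and m: "mu \<pi> chi = q" unfolding C_def by auto
      from t have "prob_dens \<pi>" "markov chi" unfolding Theta2_def by auto
      from necessity[OF this m] show "x \<in> ?B" using x by simp
    qed
  next
    show "?B \<subseteq> C"
    proof
      fix x assume "x \<in> ?B"
      then obtain P S where x: "x = (P,S)" and h: "P \<in> {0..1}" "S \<in> {-1..1::real}"
        "max (- q (True, False)) (q (False, True) - q (True, False) + P - 1) \<le> P * S"
        "P * S \<le> min (q (False, True)) (q (False, True) - q (True, False) + 1 - P)" by auto
      from sufficiency[OF assms(1) h] show "x \<in> C" unfolding C_def x by blast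
    qed
  qed
  have q: "q (False,False) \<ge> 0" "q (False,True) \<ge> 0" "q (True,False) \<ge> 0" "q (True,True) \<ge> 0"
    "q (False,False) + q (False,True) + q (True,False) + q (True,True) = 1" using assms(1) pd_bb by auto
  have "(0,0) \<in> ?B" using q by auto
  then have "C \<noteq> {}" unfolding eq using equals0D by metis
  then show ?thesis using eq by (rule conjI)
qed

end
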